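(* Let $G$ be a finite simple bipartite graph of order $n$ whose adjacency matrix $A(G)$ is non-singular, and suppose $G$ is not isomorphic to the path $P_4$. Then $\mathcal{E}(G)\geq n-1+\bar{d}$.
   Context: For a finite simple graph $G$ with $n$ vertices and $m$ edges, $A(G)$ is its adjacency matrix, $\lambda_1\ge\cdots\ge\lambda_n$ its eigenvalues, and the energy is $\mathcal{E}(G)=\sum_{i=1}^n|\lambda_i|$. $G$ is called non-singular if $A(G)$ is non-singular. $\bar d = 2m/n$ is the average degree. $P_4$ denotes the path on 4 vertices. *)

theory Defs
  imports "Jordan_Normal_Form.Char_Poly"
begin

definition simple_graph :: "nat \<Rightarrow> (nat \<Rightarrow> nat \<Rightarrow> bool) \<Rightarrow> bool" where
  "simple_graph n E \<longleftrightarrow> (\<forall>i j. E i j \<longrightarrow> i < n \<and> j < n) \<and> (\<forall>i j. E i j \<longrightarrow> E j i) \<and> (\<forall>i. \<not> E i i)"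

definition bipartite :: "nat \<Rightarrow> (nat \<Rightarrow> nat \<Rightarrow> bool) \<Rightarrow> bool" where
  "bipartite n E \<longleftrightarrow> (\<exists>X. X \<subseteq> {0..<n} \<and> (\<forall>i j. E i j \<longrightarrow> (i \<in> X \<longleftrightarrow> j \<notin> X)))"

definition num_edges :: "nat \<Rightarrow> (nat \<Rightarrow> nat \<Rightarrow> bool) \<Rightarrow> nat" where
  "num_edges n E = card {(i, j). i < j \<and> j < n \<and> E i j}"

definition avg_degree :: "nat \<Rightarrow> (nat \<Rightarrow> nat \<Rightarrow> bool) \<Rightarrow> real" where
  "avg_degree n E = 2 * real (num_edges n E) / real n"

definition adj_mat :: "nat \<Rightarrow> (nat \<Rightarrow> nat \<Rightarrow> bool) \<Rightarrow> real mat" where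
  "adj_mat n E = mat n n (\<lambda>(i, j). if E i j then 1 else 0)"

definition energy :: "nat \<Rightarrow> (nat \<Rightarrow> nat \<Rightarrow> bool) \<Rightarrow> real" where
  "energy n E = (\<Sum>x \<in># proots (char_poly (map_mat complex_of_real (adj_mat n E))). cmod x)"

definition P4_edge :: "nat \<Rightarrow> nat \<Rightarrow> bool" where
  "P4_edge i j \<longleftrightarrow> i < 4 \<and> j < 4 \<and> (i = j + 1 \<or> j = i + 1)"

definition isomorphic :: "nat \<Rightarrow> (nat \<Rightarrow> nat \<Rightarrow> bool) \<Rightarrow> nat \<Rightarrow> (nat \<Rightarrow> nat \<Rightarrow> bool) \<Rightarrow> bool" where
  "isomorphic n E n' E' \<longleftrightarrow> (\<exists>f. bij_betw f {0..<n} {0..<n'} \<and>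
      (\<forall>i\<in>{0..<n}. \<forall>j\<in>{0..<n}. E i j \<longleftrightarrow> E' (f i) (f j)))"

end

theory Submission
  imports Defs "Jordan_Normal_Form.Schur_Decomposition"
begin


definition psi :: "real \<Rightarrow> real \<Rightarrow> real" where
  "psi N x = x - x^2/N - (1 - 1/N) - (1 - 2/N) * ln x"

lemma psi_deriv: "x > 0 \<Longrightarrow> N \<noteq> 0 \<Longrightarrow> DERIV (psi N) x :> 1 - 2*x/N - (1-2/N)/x"
  unfolding psi_def
  by (auto intro!: derivative_eq_intros simp: field_simps power2_eq_square)

lemma psi_1: "psi N 1 = 0" by (simp add: psi_def)

lemma psi_deriv_sign: assumes "(x::real) > 0" "N > 0"
  shows "1 - 2*x/N - (1-2/N)/x = -(2/N)*(x-1)*(x-(N/2-1))/x"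
  using assms by (simp add: field_simps)

lemma psi_nonneg:
  assumes N: "N \<ge> 4" and x: "0 < x" "x \<le> C" and C: "N/2 - 1 \<le> C" "psi N C \<ge> 0"
  shows "psi N x \<ge> 0"
proof -
  have Np: "N > 0" using N by simp
  show ?thesis
  proof (cases "x \<le> 1")
    case True
    have "psi N 1 \<le> psi N x"
    proof (rule DERIV_nonpos_imp_nonincreasing[OF True])
      fix t assume t: "x \<le> t" "t \<le> 1"
      hence tp: "t > 0" using x by simp
      have "-(2/N)*(t-1)*(t-(N/2-1))/t \<le> 0"
      proof -
        have "0 \<le> (t-1)*(t-(N/2-1))" using t N by (intro mult_nonpos_nonpos) auto
        hence "0 \<le> (2/N)*((t-1)*(t-(N/2-1)))/t" using N tp by simp
        moreover have "-(2/N)*(t-1)*(t-(N/2-1))/t = - ((2/N)*((t-1)*(t-(N/2-1)))/t)" by simp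
        ultimately show ?thesis by linarith
      qed
      thus "\<exists>y. DERIV (psi N) t :> y \<and> y \<le> 0"
        using psi_deriv[OF tp, of N] Np psi_deriv_sign[OF tp Np] by auto
    qed
    thus ?thesis using psi_1 by simp
  next
    case False
    show ?thesis
    proof (cases "x \<le> N/2 - 1")
      case True
      have "psi N 1 \<le> psi N x"
      proof (rule DERIV_nonneg_imp_nondecreasing[of 1 x "psi N"])
        show "1 \<le> x" using False by simp
        fix t assume t: "1 \<le> t" "t \<le> x"
        hence tp: "t > 0" by simp
        have "0 \<le> -(2/N)*(t-1)*(t-(N/2-1))/t"
        proof -
          have "(t-1)*(t-(N/2-1)) \<le> 0" using t True by (intro mult_nonneg_nonpos) auto
          hence "(2/N)*((t-1)*(t-(N/2-1)))/t \<le> 0" using N tp by (simp add: divide_nonpos_pos mult_nonneg_nonpos)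
          moreover have "-(2/N)*(t-1)*(t-(N/2-1))/t = - ((2/N)*((t-1)*(t-(N/2-1)))/t)" by simp
          ultimately show ?thesis by linarith
        qed
        thus "\<exists>y. DERIV (psi N) t :> y \<and> y \<ge> 0"
          using psi_deriv[OF tp, of N] Np psi_deriv_sign[OF tp Np] by auto
      qed
      thus ?thesis using psi_1 by simp
    next
      case False2: False
      have "psi N C \<le> psi N x"
      proof (rule DERIV_nonpos_imp_nonincreasing[OF x(2)])
        fix t assume t: "x \<le> t" "t \<le> C"
        hence tp: "t > 0" using x by simp
        have "-(2/N)*(t-1)*(t-(N/2-1))/t \<le> 0"
          using tp t False False2 N by (intro divide_nonpos_pos) (auto simp: mult_le_0_iff zero_le_mult_iff)
        thus "\<exists>y. DERIV (psi N) t :> y \<and> y \<le> 0"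
          using psi_deriv[OF tp, of N] Np psi_deriv_sign[OF tp Np] by auto
      qed
      thus ?thesis using C by simp
    qed
  qed
qed

lemma ln4: "ln (4::real) \<le> 3/2"
proof -
  have "(1 + 3/4 + (3/4)^2/2) \<le> exp (3/4::real)" using exp_lower_Taylor_quadratic[of "3/4"] by simp
  hence "(1 + 3/4 + (3/4)^2/2)^2 \<le> exp (3/4::real) ^ 2" by (intro power_mono) auto
  also have "exp (3/4::real) ^ 2 = exp (3/2)" by (simp add: exp_double[symmetric])
  finally have "4 \<le> exp (3/2::real)" by (simp add: power2_eq_square)
  thus ?thesis by (metis exp_le_cancel_iff exp_ln zero_less_numeral)
qed

lemma ln52: "ln (5/2::real) \<le> 15/16"
proof -
  have "(1 + 5/16 + (5/16)^2/2) \<le> exp (5/16::real)" using exp_lower_Taylor_quadratic[of "5/16"] by simp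
  hence "(1 + 5/16 + (5/16)^2/2)^3 \<le> exp (5/16::real) ^ 3" by (intro power_mono) auto
  also have "exp (5/16::real) ^ 3 = exp (15/16)" by (simp add: exp_of_nat_mult[symmetric])
  moreover have "(5/2::real) \<le> (1 + 5/16 + (5/16)^2/2)^3" by (simp add: power3_eq_cube power2_eq_square)
  ultimately have "5/2 \<le> exp (15/16::real)" by linarith
  thus ?thesis by (metis exp_le_cancel_iff exp_ln zero_less_divide_iff zero_less_numeral)
qed

lemma psi_C6: "psi 6 (5/2) \<ge> 0"
  using ln52 by (simp add: psi_def power2_eq_square)

lemma psi_C8: assumes "N \<ge> 8" shows "psi N (N/2) \<ge> 0"
proof -
  define k where "k = N/2"
  have k4: "k \<ge> 4" using assms by (simp add: k_def)
  have "ln k = ln 4 + ln (k/4)" using k4 by (simp add: ln_div)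
  also have "ln (k/4) \<le> k/4 - 1" using k4 by (intro ln_le_minus_one) simp
  finally have lk: "ln k \<le> (k-1)/2" using ln4 k4 by simp
  have N: "N = 2*k" by (simp add: k_def)
  have "psi N (N/2) = ((k-1)/k) * ((k-1)/2 - ln k)"
    unfolding psi_def N using k4 by (simp add: field_simps power2_eq_square)
  also have "\<dots> \<ge> 0" using k4 lk by (intro mult_nonneg_nonneg) auto
  finally show ?thesis .
qed

lemma sum_ln_prod: fixes ys :: "real list" shows "(\<forall>y\<in>set ys. y > 0) \<Longrightarrow> sum_list (map ln ys) = ln (prod_list ys)"
proof (induction ys)
  case (Cons a ys)
  have "prod_list ys > 0" using Cons(2) by (induction ys) (auto intro: mult_pos_pos)
  thus ?case using Cons by (auto simp: ln_mult)
qed simp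

lemma sum_ge_len: fixes ys :: "real list" assumes "\<forall>y\<in>set ys. y > 0" "sum_list (map ln ys) \<ge> 0"
  shows "sum_list ys \<ge> length ys"
proof -
  have "sum_list (map (\<lambda>y. 1 + ln y) ys) \<le> sum_list ys"
    using assms(1)
  proof (induction ys)
    case (Cons a ys)
    have "ln a \<le> a - 1" using Cons(2) by (intro ln_le_minus_one) auto
    thus ?case using Cons by auto
  qed simp
  moreover have "sum_list (map (\<lambda>y. 1 + ln y) ys) = length ys + sum_list (map ln ys)"
    by (induction ys) auto
  ultimately show ?thesis using assms(2) by simp
qed

lemma sum_psi: fixes ys :: "real list" shows "sum_list (map (psi N) ys) = sum_list ys - sum_list (map (\<lambda>y. y^2) ys)/N
   - length ys * (1 - 1/N) - (1 - 2/N) * sum_list (map ln ys)"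
  by (induction ys) (auto simp: psi_def add_divide_distrib diff_divide_distrib algebra_simps)

lemma key_sum: fixes ys :: "real list"
  assumes "length ys = n" "real n \<ge> 2" "\<forall>y\<in>set ys. y > 0 \<and> psi n y \<ge> 0" "sum_list (map ln ys) \<ge> 0"
  shows "sum_list ys \<ge> real n - 1 + sum_list (map (\<lambda>y. y^2) ys)/n"
proof -
  have "sum_list (map (psi n) ys) \<ge> 0" using assms(3) by (induction ys) auto
  hence "0 \<le> sum_list ys - sum_list (map (\<lambda>y. y^2) ys)/n
   - n * (1 - 1/n) - (1 - 2/n) * sum_list (map ln ys)" using sum_psi[of n ys] assms(1) by simp
  moreover have "(1 - 2/n) * sum_list (map ln ys) \<ge> 0" using assms(2,4) by (intro mult_nonneg_nonneg) (auto simp: field_simps)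
  moreover have "real n * (1 - 1/n) = n - 1" using assms(2) by (simp add: field_simps)
  ultimately show ?thesis by linarith
qed

lemma sq_sum_bound: fixes ys :: "real list"
  assumes L: "L > 0" and ys: "\<forall>y\<in>set ys. y > 0"
  shows "L * sum_list (map (\<lambda>y. y^2) ys) \<ge> length ys + length ys * ln L + 2 * sum_list (map ln ys)"
  using ys
proof (induction ys)
  case (Cons a ys)
  have a: "a > 0" using Cons by auto
  have "ln (L * a^2) \<le> L * a^2 - 1" using L a by (intro ln_le_minus_one) auto
  moreover have "ln (L * a^2) = ln L + 2 * ln a" using L a by (simp add: ln_mult ln_realpow)
  ultimately have "1 + ln L + 2 * ln a \<le> L * a^2" by linarith
  thus ?case using Cons by (simp add: algebra_simps)
qed simp

lemma cap6: fixes L :: real assumes "L > 0" "2*L^2 + 4/L \<le> 14" shows "L \<le> 5/2"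
proof (rule ccontr)
  assume "\<not> L \<le> 5/2"
  hence L: "L > 5/2" by simp
  have "2*L^3 + 4 \<le> 14 * L" using assms
    by (simp add: field_simps power2_eq_square power3_eq_cube)
  moreover have "(L - 5/2) * (L^2 + 5/2*L - 3/4) > 0"
  proof (intro mult_pos_pos)
    show "L - 5/2 > 0" using L by simp
    have "L^2 \<ge> 0" by simp
    moreover have "5/2*L > 3/4" using L by simp
    ultimately show "L^2 + 5/2*L - 3/4 > 0" by linarith
  qed
  moreover have "(L - 5/2) * (L^2 + 5/2*L - 3/4) = L^3 - 7*L + 15/8"
    by (simp add: field_simps power2_eq_square power3_eq_cube)
  ultimately show False by linarith
qed



definition deg :: "nat \<Rightarrow> (nat \<Rightarrow> nat \<Rightarrow> bool) \<Rightarrow> nat \<Rightarrow> nat" where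
  "deg n E x = card {y. y < n \<and> E x y}"

lemma adj_carrier[simp]: "adj_mat n E \<in> carrier_mat n n"
  by (simp add: adj_mat_def)

lemma adj_index[simp]: "i < n \<Longrightarrow> j < n \<Longrightarrow> adj_mat n E $$ (i,j) = (if E i j then 1 else 0)"
  by (simp add: adj_mat_def)

lemma det_int: "\<exists>z::int. det (adj_mat n E) = of_int z"
proof -
  have "adj_mat n E = map_mat of_int (mat n n (\<lambda>(i,j). if E i j then 1 else 0 :: int))"
    by (rule eq_matI) (auto simp: adj_mat_def)
  hence "det (adj_mat n E) = of_int (det (mat n n (\<lambda>(i,j). if E i j then 1 else 0 :: int)))"
    using of_int_hom.hom_det by metis
  thus ?thesis by blast
qed

lemma det_ge1: assumes "det (adj_mat n E) \<noteq> 0" shows "\<bar>det (adj_mat n E)\<bar> \<ge> 1"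
proof -
  obtain z :: int where z: "det (adj_mat n E) = of_int z" using det_int by blast
  hence "z \<noteq> 0" using assms by auto
  hence "\<bar>z\<bar> \<ge> 1" by simp
  thus ?thesis unfolding z by (metis of_int_1_le_iff of_int_abs)
qed

lemma matching:
  assumes "det (adj_mat n E) \<noteq> 0"
  shows "\<exists>p. p permutes {0..<n} \<and> (\<forall>i<n. E i (p i))"
proof (rule ccontr)
  assume c: "\<not> ?thesis"
  have "det (adj_mat n E) = (\<Sum> p \<in> {p. p permutes {0 ..< n}}.
     signof p * (\<Prod> i = 0 ..< n. adj_mat n E $$ (i, p i)))"
    by (rule det_def') simp
  also have "\<dots> = 0"
  proof (rule sum.neutral, intro ballI)
    fix p assume p: "p \<in> {p. p permutes {0..<n}}"
    then obtain i where i: "i < n" "\<not> E i (p i)" using c by blast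
    have "p i < n" using p i permutes_in_image[of p "{0..<n}" i] by auto
    hence "adj_mat n E $$ (i, p i) = 0" using i by simp
    hence "(\<Prod> i = 0 ..< n. adj_mat n E $$ (i, p i)) = 0"
      using i by (intro prod_zero) auto
    thus "signof p * (\<Prod> i = 0 ..< n. adj_mat n E $$ (i, p i)) = 0" by simp
  qed
  finally show False using assms by simp
qed

lemma balanced:
  assumes sg: "simple_graph n E" and X: "X \<subseteq> {0..<n}" and bip: "\<forall>i j. E i j \<longrightarrow> (i \<in> X \<longleftrightarrow> j \<notin> X)"
    and p: "p permutes {0..<n}" "\<forall>i<n. E i (p i)"
  shows "card X = card ({0..<n} - X)" "n = 2 * card X"
proof -
  let ?Y = "{0..<n} - X"
  have inj: "inj_on p S" for S using p(1) permutes_inj by (metis inj_on_subset subset_UNIV)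
  have "p ` X \<subseteq> ?Y"
  proof
    fix y assume "y \<in> p ` X"
    then obtain i where i: "i \<in> X" "y = p i" by auto
    have "i < n" using X i by auto
    hence "E i (p i)" using p by auto
    thus "y \<in> ?Y" using sg bip i unfolding simple_graph_def by auto
  qed
  hence c1: "card X \<le> card ?Y" using card_inj_on_le[OF inj] by auto
  have "p ` ?Y \<subseteq> X"
  proof
    fix y assume "y \<in> p ` ?Y"
    then obtain i where i: "i \<in> ?Y" "y = p i" by auto
    hence "E i (p i)" using p by auto
    thus "y \<in> X" using sg bip i unfolding simple_graph_def by auto
  qed
  hence c2: "card ?Y \<le> card X" using card_inj_on_le[OF inj] X finite_subset by (metis finite_atLeastLessThan)
  show "card X = card ?Y" using c1 c2 by simp
  have "card X + card ?Y = n" using X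
    by (metis card_Diff_subset card_atLeastLessThan diff_zero finite_atLeastLessThan finite_subset le_add_diff_inverse card_mono)
  thus "n = 2 * card X" using c1 c2 by simp
qed

lemma edges_sum:
  assumes sg: "simple_graph n E" and X: "X \<subseteq> {0..<n}" and bip: "\<forall>i j. E i j \<longrightarrow> (i \<in> X \<longleftrightarrow> j \<notin> X)"
  shows "num_edges n E = (\<Sum>x\<in>X. deg n E x)"
proof -
  let ?S = "{(i, j). i < j \<and> j < n \<and> E i j}"
  let ?T = "Sigma X (\<lambda>x. {y. y < n \<and> E x y})"
  let ?f = "\<lambda>(i,j). if i \<in> X then (i,j) else (j,i)"
  have sym: "E i j \<Longrightarrow> E j i" for i j using sg unfolding simple_graph_def by auto
  have irr: "\<not> E i i" for i using sg unfolding simple_graph_def by auto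
  have bd: "E i j \<Longrightarrow> i < n \<and> j < n" for i j using sg unfolding simple_graph_def by auto
  have "bij_betw ?f ?S ?T"
  proof (rule bij_betwI')
    fix a b assume ab: "a \<in> ?S" "b \<in> ?S"
    obtain i j where a: "a = (i,j)" by (cases a)
    obtain i' j' where b: "b = (i',j')" by (cases b)
    have h: "i < j" "i' < j'" using ab a b by auto
    show "(?f a = ?f b) = (a = b)"
    proof
      assume e: "?f a = ?f b"
      show "a = b"
      proof (cases "i \<in> X"; cases "i' \<in> X")
        assume "i \<in> X" "i' \<notin> X" thus ?thesis using e a b h by simp
      next
        assume "i \<notin> X" "i' \<in> X" thus ?thesis using e a b h by simp
      qed (use e a b in simp_all)
    qed simp
  next
    fix a assume "a \<in> ?S"
    then obtain i j where a: "a = (i,j)" "i < j" "j < n" "E i j" by auto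
    have "i < n" using a by simp
    show "?f a \<in> ?T"
    proof (cases "i \<in> X")
      case True thus ?thesis using a by simp
    next
      case False
      hence "j \<in> X" using bip a by blast
      thus ?thesis using a False sym \<open>i < n\<close> by simp
    qed
  next
    fix b assume b: "b \<in> ?T"
    obtain x y where xy: "b = (x,y)" by (cases b)
    have xX: "x \<in> X" and y: "y < n" "E x y" using b xy by auto
    have yX: "y \<notin> X" using bip xX y by auto
    have "x \<noteq> y" using irr y by auto
    hence "x < y \<or> y < x" by arith
    thus "\<exists>a\<in>?S. b = ?f a"
    proof
      assume "x < y" thus ?thesis using xy xX y by (intro bexI[of _ "(x,y)"]) auto
    next
      assume "y < x" thus ?thesis using xy xX yX y bd sym by (intro bexI[of _ "(y,x)"]) auto
    qed
  qed
  hence "card ?S = card ?T" by (rule bij_betw_same_card)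
  also have "card ?T = (\<Sum>x\<in>X. card {y. y < n \<and> E x y})"
    using X by (intro card_SigmaI) (auto intro: finite_subset)
  finally show ?thesis unfolding num_edges_def deg_def .
qed

lemma deg_le:
  assumes sg: "simple_graph n E" and X: "X \<subseteq> {0..<n}" and bip: "\<forall>i j. E i j \<longrightarrow> (i \<in> X \<longleftrightarrow> j \<notin> X)"
    and x: "x \<in> X"
  shows "{y. y < n \<and> E x y} \<subseteq> {0..<n} - X" "deg n E x \<le> card ({0..<n} - X)"
proof -
  show s: "{y. y < n \<and> E x y} \<subseteq> {0..<n} - X" using bip x by auto
  show "deg n E x \<le> card ({0..<n} - X)" unfolding deg_def by (rule card_mono[OF _ s]) simp
qed

lemma full_rows:
  assumes sg: "simple_graph n E" and X: "X \<subseteq> {0..<n}" and bip: "\<forall>i j. E i j \<longrightarrow> (i \<in> X \<longleftrightarrow> j \<notin> X)"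
    and x: "x \<in> X" "x' \<in> X" "x \<noteq> x'"
    and d: "deg n E x = card ({0..<n} - X)" "deg n E x' = card ({0..<n} - X)"
  shows "det (adj_mat n E) = 0"
proof -
  have N: "{y. y < n \<and> E z y} = {0..<n} - X" if "z \<in> X" "deg n E z = card ({0..<n} - X)" for z
    using deg_le(1)[OF sg X bip that(1)] that(2) unfolding deg_def
    by (intro card_subset_eq) auto
  have "row (adj_mat n E) x = row (adj_mat n E) x'"
  proof (rule eq_vecI)
    fix j assume j: "j < dim_vec (row (adj_mat n E) x')"
    hence jn: "j < n" by (simp add: adj_mat_def)
    have "E x j = E x' j" using N[OF x(1) d(1)] N[OF x(2) d(2)] jn by blast
    moreover have "x < n" "x' < n" using x X by auto
    ultimately show "row (adj_mat n E) x $ j = row (adj_mat n E) x' $ j" using jn by (simp add: adj_mat_def)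
  qed simp
  thus ?thesis using x X by (intro det_identical_rows[of _ n x x']) auto
qed

lemma m_bound:
  assumes sg: "simple_graph n E" and X: "X \<subseteq> {0..<n}" and bip: "\<forall>i j. E i j \<longrightarrow> (i \<in> X \<longleftrightarrow> j \<notin> X)"
    and det: "det (adj_mat n E) \<noteq> 0" and k: "card X = k" "card ({0..<n} - X) = k"
  shows "num_edges n E \<le> k * (k - 1) + 1" "num_edges n E \<le> k * k"
proof -
  have fX: "finite X" using X finite_subset by blast
  let ?F = "{x \<in> X. deg n E x = k}"
  have "card ?F \<le> Suc 0"
    using full_rows[OF sg X bip _ _ _ _ _] det k fX by (subst card_le_Suc0_iff_eq) auto
  have dle: "deg n E x \<le> k" if "x \<in> X" for x using deg_le(2)[OF sg X bip that] k by simp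
  have "num_edges n E = (\<Sum>x\<in>X. deg n E x)" by (rule edges_sum[OF sg X bip])
  also have "\<dots> \<le> (\<Sum>x\<in>X. (k - 1) + (if x \<in> ?F then 1 else 0))"
    using dle by (intro sum_mono) (auto, metis One_nat_def Suc_pred le_SucE le_zero_eq not_gr_zero)
  also have "\<dots> = k * (k - 1) + card ?F" using fX k by (simp add: sum.distrib sum.inter_filter[symmetric])
  finally show "num_edges n E \<le> k * (k - 1) + 1" using \<open>card ?F \<le> Suc 0\<close> by simp
  have "(\<Sum>x\<in>X. deg n E x) \<le> (\<Sum>x\<in>X. k)" using dle by (intro sum_mono) auto
  thus "num_edges n E \<le> k * k" using edges_sum[OF sg X bip] k by simp
qed

lemma P4_iso:
  assumes sg: "simple_graph 4 E" and U: "{0..<4} = {a,b,c,d}" and dist: "distinct [a,b,c,d]"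
    and e: "E a c" "E a d" "E b d" "\<not> E b c" "\<not> E a b" "\<not> E c d"
  shows "isomorphic 4 E 4 P4_edge"
proof -
  have sym: "E i j \<longleftrightarrow> E j i" for i j using sg unfolding simple_graph_def by auto
  have irr: "\<not> E i i" for i using sg unfolding simple_graph_def by auto
  define f where "f = (\<lambda>i. if i = b then 0 else if i = d then 1 else if i = a then (2::nat) else 3)"
  have four: "{0..<4::nat} = {0,1,2,3}" by (auto simp: eval_nat_numeral less_Suc_eq)
  have img: "f ` {a,b,c,d} = {0..<4}" unfolding four using dist unfolding f_def by auto
  have "inj_on f {a,b,c,d}" using dist unfolding f_def inj_on_def by auto
  hence "bij_betw f {0..<4} {0..<4}" using img U unfolding bij_betw_def by simp
  moreover have "\<forall>i\<in>{0..<4}. \<forall>j\<in>{0..<4}. E i j \<longleftrightarrow> P4_edge (f i) (f j)"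
    unfolding U using dist e sym irr unfolding f_def P4_edge_def by auto
  ultimately show ?thesis unfolding isomorphic_def by blast
qed



abbreviation Ac :: "nat \<Rightarrow> (nat \<Rightarrow> nat \<Rightarrow> bool) \<Rightarrow> complex mat" where
  "Ac n E \<equiv> map_mat complex_of_real (adj_mat n E)"

lemma adj_dims[simp]: "dim_row (adj_mat n E) = n" "dim_col (adj_mat n E) = n"
  by (simp_all add: adj_mat_def)

lemma Ac_carrier[simp]: "Ac n E \<in> carrier_mat n n" by simp

lemma Ac_index[simp]: "i < n \<Longrightarrow> j < n \<Longrightarrow> Ac n E $$ (i,j) = (if E i j then 1 else 0)"
  by (simp add: adj_mat_def)

definition tr :: "nat \<Rightarrow> complex mat \<Rightarrow> complex" where
  "tr n X = (\<Sum>i<n. X $$ (i,i))"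

lemma tr_comm: assumes "X \<in> carrier_mat n n" "Y \<in> carrier_mat n n"
  shows "tr n (X * Y) = tr n (Y * X)"
proof -
  have "tr n (X * Y) = (\<Sum>i<n. \<Sum>k<n. X $$ (i,k) * Y $$ (k,i))"
    using assms unfolding tr_def
    by (intro sum.cong) (auto simp: scalar_prod_def lessThan_atLeast0 intro!: sum.cong)
  also have "\<dots> = (\<Sum>k<n. \<Sum>i<n. Y $$ (k,i) * X $$ (i,k))"
    by (subst sum.swap) (simp add: mult.commute)
  also have "\<dots> = tr n (Y * X)"
    using assms unfolding tr_def
    by (intro sum.cong) (auto simp: scalar_prod_def lessThan_atLeast0 intro!: sum.cong)
  finally show ?thesis .
qed

lemma tr_upper: assumes "B \<in> carrier_mat n n" "upper_triangular B"
  shows "tr n (B * B) = (\<Sum>i<n. B $$ (i,i) ^ 2)"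
  unfolding tr_def
proof (rule sum.cong[OF refl])
  fix i assume i: "i \<in> {..<n}"
  have "(B * B) $$ (i,i) = (\<Sum>k\<in>{0..<n}. B $$ (i,k) * B $$ (k,i))"
    using assms i by (simp add: scalar_prod_def)
  also have "\<dots> = B $$ (i,i) * B $$ (i,i) + (\<Sum>k\<in>{0..<n}-{i}. B $$ (i,k) * B $$ (k,i))"
    using i by (subst sum.remove[of _ i]) auto
  also have "(\<Sum>k\<in>{0..<n}-{i}. B $$ (i,k) * B $$ (k,i)) = 0"
  proof (rule sum.neutral, intro ballI)
    fix k assume k: "k \<in> {0..<n}-{i}"
    show "B $$ (i,k) * B $$ (k,i) = 0"
    proof (cases "k < i")
      case True thus ?thesis using assms i unfolding upper_triangular_def by auto
    next
      case False hence "i < k" using k by auto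
      thus ?thesis using assms k unfolding upper_triangular_def by auto
    qed
  qed
  finally show "(B * B) $$ (i,i) = B $$ (i,i) ^ 2" by (simp add: power2_eq_square)
qed

lemma roots_in: assumes cp: "char_poly (Ac n E) = (\<Prod>a\<leftarrow>as. [:-a,1:])"
  shows "poly (char_poly (Ac n E)) x = 0 \<longleftrightarrow> x \<in> set as"
  unfolding cp poly_prod_list by (induction as) auto

lemma cnj_mult_self: "cnj z * z = complex_of_real (cmod z ^ 2)"
  by (metis complex_norm_square mult.commute)

lemma eigen_real:
  assumes sg: "simple_graph n E" and ev: "eigenvalue (Ac n E) a"
  shows "Im a = 0"
proof -
  obtain v where v: "v \<in> carrier_vec n" "v \<noteq> 0\<^sub>v n" "Ac n E *\<^sub>v v = a \<cdot>\<^sub>v v"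
    using ev unfolding eigenvalue_def eigenvector_def by auto
  have sym: "E i j \<longleftrightarrow> E j i" for i j using sg unfolding simple_graph_def by auto
  define R where "R = (\<Sum>i<n. \<Sum>j<n. (if E i j then 1 else 0) * cnj (v$i) * v$j)"
  define T where "T = (\<Sum>i<n. cmod (v$i) ^ 2)"
  have Av: "(\<Sum>j<n. (if E i j then 1 else 0) * v$j) = a * v$i" if "i < n" for i
  proof -
    have "(Ac n E *\<^sub>v v) $ i = a * v$i" using v that by simp
    moreover have "(Ac n E *\<^sub>v v) $ i = (\<Sum>j<n. (if E i j then 1 else 0) * v$j)"
      using v(1) that by (auto simp: scalar_prod_def lessThan_atLeast0 adj_mat_def intro!: sum.cong)
    ultimately show ?thesis by simp
  qed
  have "R = (\<Sum>i<n. cnj (v$i) * (\<Sum>j<n. (if E i j then 1 else 0) * v$j))"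
    unfolding R_def by (simp add: sum_distrib_left mult_ac)
  also have "\<dots> = (\<Sum>i<n. a * (cnj (v$i) * v$i))" using Av by (intro sum.cong) (auto simp: mult_ac)
  also have "\<dots> = (\<Sum>i<n. a * of_real (cmod (v$i)^2))" by (simp only: cnj_mult_self)
  also have "\<dots> = a * of_real T" unfolding T_def by (simp only: of_real_sum sum_distrib_left)
  finally have R1: "R = a * of_real T" .
  have "cnj R = (\<Sum>i<n. \<Sum>j<n. (if E i j then 1 else 0) * v$i * cnj (v$j))"
    unfolding R_def cnj_sum by (intro sum.cong refl) (simp split: if_splits)
  also have "\<dots> = (\<Sum>j<n. \<Sum>i<n. (if E j i then 1 else 0) * cnj (v$j) * v$i)"
    by (subst sum.swap) (intro sum.cong refl, auto simp: sym mult_ac)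
  also have "\<dots> = R" unfolding R_def by simp
  finally have "Im R = 0" by (metis Reals_cnj_iff complex_is_Real_iff)
  hence "Im a * T = 0" using R1 by simp
  moreover have "T > 0"
  proof -
    obtain i where i: "i < n" "v$i \<noteq> 0" using v by (metis carrier_vecD eq_vecI index_zero_vec(1,2))
    have "cmod (v$i) ^ 2 > 0" using i by simp
    moreover have "cmod (v$i) ^ 2 \<le> T" unfolding T_def using i
      by (intro member_le_sum) auto
    ultimately show ?thesis by linarith
  qed
  ultimately show ?thesis by simp
qed

lemma eigen_neg:
  assumes sg: "simple_graph n E" and bip: "\<forall>i j. E i j \<longrightarrow> (i \<in> X \<longleftrightarrow> j \<notin> X)"
    and ev: "eigenvalue (Ac n E) a"
  shows "eigenvalue (Ac n E) (-a)"
proof -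
  obtain v where v: "v \<in> carrier_vec n" "v \<noteq> 0\<^sub>v n" "Ac n E *\<^sub>v v = a \<cdot>\<^sub>v v"
    using ev unfolding eigenvalue_def eigenvector_def by auto
  define w where "w = vec n (\<lambda>i. if i \<in> X then v$i else - v$i)"
  have Av: "(\<Sum>j<n. (if E i j then 1 else 0) * v$j) = a * v$i" if "i < n" for i
  proof -
    have "(Ac n E *\<^sub>v v) $ i = a * v$i" using v that by simp
    moreover have "(Ac n E *\<^sub>v v) $ i = (\<Sum>j<n. (if E i j then 1 else 0) * v$j)"
      using v(1) that by (auto simp: scalar_prod_def lessThan_atLeast0 adj_mat_def intro!: sum.cong)
    ultimately show ?thesis by simp
  qed
  have "Ac n E *\<^sub>v w = (-a) \<cdot>\<^sub>v w"
  proof (rule eq_vecI)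
    fix i assume "i < dim_vec ((-a) \<cdot>\<^sub>v w)"
    hence i: "i < n" by (simp add: w_def)
    have "(Ac n E *\<^sub>v w) $ i = (\<Sum>j<n. (if E i j then 1 else 0) * w$j)"
      using i by (auto simp: w_def scalar_prod_def lessThan_atLeast0 intro!: sum.cong)
    also have "\<dots> = (\<Sum>j<n. (if i \<in> X then -1 else 1) * ((if E i j then 1 else 0) * v$j))"
      using bip by (intro sum.cong) (auto simp: w_def)
    also have "\<dots> = (if i \<in> X then -1 else 1) * (a * v$i)"
      by (simp add: sum_distrib_left[symmetric] Av[OF i])
    also have "\<dots> = ((-a) \<cdot>\<^sub>v w) $ i" using i by (simp add: w_def)
    finally show "(Ac n E *\<^sub>v w) $ i = ((-a) \<cdot>\<^sub>v w) $ i" .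
  qed (simp add: w_def)
  moreover have "w \<noteq> 0\<^sub>v n"
  proof
    assume w0: "w = 0\<^sub>v n"
    have "v = 0\<^sub>v n"
    proof (rule eq_vecI)
      fix i assume "i < dim_vec (0\<^sub>v n :: complex vec)"
      hence i: "i < n" by simp
      have "w $ i = 0" using w0 i by simp
      thus "v $ i = 0\<^sub>v n $ i" using i by (simp add: w_def split: if_splits)
    qed (use v in simp)
    thus False using v by simp
  qed
  moreover have "w \<in> carrier_vec n" by (simp add: w_def)
  ultimately show ?thesis unfolding eigenvalue_def eigenvector_def by auto
qed

lemma tr_deg: assumes sg: "simple_graph n E"
  shows "tr n (Ac n E * Ac n E) = of_nat (\<Sum>i<n. deg n E i)"
proof -
  have sym: "E i j \<longleftrightarrow> E j i" for i j using sg unfolding simple_graph_def by auto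
  have "tr n (Ac n E * Ac n E) = (\<Sum>i<n. \<Sum>j<n. (if E i j then 1 else 0 :: complex))"
    unfolding tr_def
    by (intro sum.cong refl) (auto simp: scalar_prod_def lessThan_atLeast0 sym intro!: sum.cong)
  also have "\<dots> = (\<Sum>i<n. of_nat (deg n E i))"
  proof (intro sum.cong refl)
    fix i
    have "(\<Sum>j<n. (if E i j then 1 else 0 :: complex)) = (\<Sum>j\<in>{j \<in> {..<n}. E i j}. 1)"
      by (rule sum.inter_filter[symmetric]) simp
    also have "{j \<in> {..<n}. E i j} = {j. j < n \<and> E i j}" by auto
    finally show "(\<Sum>j<n. (if E i j then 1 else 0 :: complex)) = of_nat (deg n E i)"
      unfolding deg_def by simp
  qed
  finally show ?thesis by simp
qed

lemma deg_total:
  assumes sg: "simple_graph n E" and X: "X \<subseteq> {0..<n}" and bip: "\<forall>i j. E i j \<longrightarrow> (i \<in> X \<longleftrightarrow> j \<notin> X)"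
  shows "(\<Sum>i<n. deg n E i) = 2 * num_edges n E"
proof -
  let ?Y = "{0..<n} - X"
  have bipY: "\<forall>i j. E i j \<longrightarrow> (i \<in> ?Y \<longleftrightarrow> j \<notin> ?Y)"
    using bip sg unfolding simple_graph_def by auto
  have "(\<Sum>i<n. deg n E i) = (\<Sum>i\<in>X. deg n E i) + (\<Sum>i\<in>?Y. deg n E i)"
    using X by (simp add: lessThan_atLeast0 sum.subset_diff[of X "{0..<n}"])
  also have "\<dots> = 2 * num_edges n E"
    using edges_sum[OF sg X bip] edges_sum[OF sg _ bipY] by simp
  finally show ?thesis .
qed

lemma proots_lin: "proots (\<Prod>a\<leftarrow>as. [:-a,1:]) = mset (as::complex list)"
proof (induction as)
  case (Cons a as)
  have nz: "(\<Prod>a\<leftarrow>as. [:-a,1:]) \<noteq> 0" by (subst prod_list_zero_iff) auto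
  have "proots [:-a,1:] = {#a#}" using proots_linear_factor[of "-a"] by simp
  have "proots (\<Prod>x\<leftarrow>a#as. [:-x,1:]) = proots ([:-a,1:] * (\<Prod>a\<leftarrow>as. [:-a,1:]))" by simp
  also have "\<dots> = proots [:-a,1:] + proots (\<Prod>a\<leftarrow>as. [:-a,1:])"
    by (rule proots_mult) (use nz in auto)
  finally show ?case using Cons \<open>proots [:-a,1:] = {#a#}\<close> by simp
qed simp

lemma spectral:
  assumes sg: "simple_graph n E"
  obtains as where "length as = n" "energy n E = sum_list (map cmod as)"
    "prod_list as = complex_of_real (det (adj_mat n E))"
    "sum_list (map (\<lambda>a. a^2) as) = tr n (Ac n E * Ac n E)"
    "\<And>a. eigenvalue (Ac n E) a \<longleftrightarrow> a \<in> set as"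
proof -
  obtain as where cp: "char_poly (Ac n E) = (\<Prod>a\<leftarrow>as. [:-a,1:])" and len: "length as = n"
    using char_poly_factorized[OF Ac_carrier] by blast
  have ev: "eigenvalue (Ac n E) a \<longleftrightarrow> a \<in> set as" for a
    using eigenvalue_root_char_poly[OF Ac_carrier] roots_in[OF cp] by blast
  have "proots (char_poly (Ac n E)) = mset as" unfolding cp
    by (rule proots_lin)
  hence en: "energy n E = sum_list (map cmod as)" unfolding energy_def
    by (metis mset_map sum_mset_sum_list)
  obtain B P Q where sd: "schur_decomposition (Ac n E) as = (B,P,Q)" by (cases "schur_decomposition (Ac n E) as") auto
  from schur_decomposition[OF Ac_carrier cp sd]
  have sim: "similar_mat_wit (Ac n E) B P Q" and ut: "upper_triangular B" and dg: "diag_mat B = as" by auto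
  from sim have car: "B \<in> carrier_mat n n" "P \<in> carrier_mat n n" "Q \<in> carrier_mat n n"
    and PQ: "P * Q = 1\<^sub>m n" and QP: "Q * P = 1\<^sub>m n" and AE: "Ac n E = P * B * Q"
    unfolding similar_mat_wit_def Let_def by auto
  have "det (Ac n E) = det P * det B * det Q" unfolding AE using car
    by (simp add: det_mult[of _ n])
  also have "\<dots> = det B * det (P * Q)" using car by (simp add: det_mult[of _ n])
  also have "\<dots> = prod_list as" unfolding PQ using det_upper_triangular[OF ut car(1)] dg by simp
  finally have dt: "prod_list as = complex_of_real (det (adj_mat n E))" by simp
  have "Ac n E * Ac n E = Ac n E ^\<^sub>m 2" by (simp add: numeral_2_eq_2)
  also have "\<dots> = P * (B ^\<^sub>m 2) * Q" by (rule similar_mat_wit_pow_id[OF sim])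
  also have "B ^\<^sub>m 2 = B * B" using car by (simp add: numeral_2_eq_2)
  finally have AA: "Ac n E * Ac n E = P * (B * B) * Q" .
  have BB: "B * B \<in> carrier_mat n n" using car by simp
  have "tr n (Ac n E * Ac n E) = tr n (P * ((B * B) * Q))" unfolding AA using car BB
    by (simp add: assoc_mult_mat[of _ n n _ n _ n])
  also have "\<dots> = tr n (((B * B) * Q) * P)" using car BB by (intro tr_comm) auto
  also have "\<dots> = tr n (B * B)" using car BB QP
    by (simp add: assoc_mult_mat[of _ n n _ n _ n])
  also have "\<dots> = (\<Sum>i<n. B $$ (i,i) ^ 2)" by (rule tr_upper[OF car(1) ut])
  also have "\<dots> = sum_list (map (\<lambda>a. a^2) as)" unfolding dg[symmetric] diag_mat_def using car
    by (simp add: interv_sum_list_conv_sum_set_nat lessThan_atLeast0)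
  finally have trr: "sum_list (map (\<lambda>a. a^2) as) = tr n (Ac n E * Ac n E)" ..
  show ?thesis using that len en dt trr ev by blast
qed



lemma k2_sub:
  assumes sg: "simple_graph 4 E" and X: "X = {a,b}" and Y: "{0..<4} - X = {c,d}"
    and ab: "a \<noteq> b" and cd: "c \<noteq> d" and Xs: "X \<subseteq> {0..<4}"
    and bip: "\<forall>i j. E i j \<longrightarrow> (i \<in> X \<longleftrightarrow> j \<notin> X)"
    and da: "deg 4 E a = 2" and db: "deg 4 E b = 1"
  shows "isomorphic 4 E 4 P4_edge"
proof -
  have aX: "a \<in> X" "b \<in> X" using X by auto
  have "c \<in> {0..<4} - X" "d \<in> {0..<4} - X" unfolding Y by blast+
  hence cY: "c \<notin> X" "d \<notin> X" "c < 4" "d < 4" by simp_all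
  have U: "{0..<4} = {a,b,c,d}"
  proof -
    have "{0..<4} = X \<union> ({0..<4} - X)" using Xs by blast
    also have "\<dots> = {a,b} \<union> {c,d}" by (simp only: Y) (simp only: X)
    finally show ?thesis by (simp only: Un_insert_left Un_empty_left)
  qed
  have dist: "distinct [a,b,c,d]" using ab cd aX cY by auto
  have cardY: "card ({0..<4::nat} - X) = 2" unfolding Y using cd by simp
  have Na: "{y. y < 4 \<and> E a y} = {c,d}"
  proof -
    have "{y. y < 4 \<and> E a y} \<subseteq> {0..<4} - X" by (rule deg_le(1)[OF sg Xs bip aX(1)])
    moreover have "card {y. y < 4 \<and> E a y} = card ({0..<4::nat} - X)" using da cardY unfolding deg_def by simp
    ultimately show ?thesis unfolding Y by (intro card_subset_eq) auto
  qed
  have Nb: "{y. y < 4 \<and> E b y} \<subseteq> {c,d}" using deg_le(1)[OF sg Xs bip aX(2)] unfolding Y .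
  have "card {y. y < 4 \<and> E b y} = 1" using db unfolding deg_def .
  then obtain z where z: "{y. y < 4 \<and> E b y} = {z}" by (rule card_1_singletonE)
  have e1: "E a c" "E a d" using Na cY by auto
  have e2: "\<not> E a b" "\<not> E c d" using bip aX cY by blast+
  have "z = c \<or> z = d" using z Nb by blast
  thus ?thesis
  proof
    assume zc: "z = c"
    have "c \<in> {y. y < 4 \<and> E b y}" "d \<notin> {y. y < 4 \<and> E b y}" using z zc cd by simp_all
    hence "E b c" "\<not> E b d" using cY by simp_all
    moreover have "{0..<4} = {a,b,d,c}" unfolding U by (simp add: insert_commute)
    moreover have "distinct [a,b,d,c]" using dist by simp
    moreover have "\<not> E d c" using bip cY by blast
    ultimately show ?thesis using P4_iso[OF sg _ _ e1(2) e1(1)] e2 by blast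
  next
    assume zd: "z = d"
    have "d \<in> {y. y < 4 \<and> E b y}" "c \<notin> {y. y < 4 \<and> E b y}" using z zd cd by simp_all
    hence "E b d" "\<not> E b c" using cY by simp_all
    thus ?thesis using P4_iso[OF sg U dist e1] e2 by simp
  qed
qed

lemma k2_case:
  assumes sg: "simple_graph 4 E" and Xs: "X \<subseteq> {0..<4}"
    and bip: "\<forall>i j. E i j \<longrightarrow> (i \<in> X \<longleftrightarrow> j \<notin> X)"
    and cX: "card X = 2" and cY: "card ({0..<4} - X) = 2" and m: "num_edges 4 E = 3"
  shows "isomorphic 4 E 4 P4_edge"
proof -
  obtain a b where X: "X = {a,b}" and ab: "a \<noteq> b" using cX by (auto simp: card_2_iff)
  obtain c d where Y: "{0..<4} - X = {c,d}" and cd: "c \<noteq> d" using cY by (auto simp: card_2_iff)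
  have "num_edges 4 E = deg 4 E a + deg 4 E b" using edges_sum[OF sg Xs bip] X ab by simp
  moreover have "deg 4 E a \<le> 2" "deg 4 E b \<le> 2" using deg_le(2)[OF sg Xs bip] X cY by auto
  ultimately have "(deg 4 E a = 2 \<and> deg 4 E b = 1) \<or> (deg 4 E b = 2 \<and> deg 4 E a = 1)" using m by linarith
  thus ?thesis
  proof
    assume "deg 4 E a = 2 \<and> deg 4 E b = 1"
    thus ?thesis using k2_sub[OF sg X Y ab cd Xs bip] by blast
  next
    assume h: "deg 4 E b = 2 \<and> deg 4 E a = 1"
    have X': "X = {b,a}" using X by blast
    have Y': "{0..<4} - X = {c,d}" by (rule Y)
    show ?thesis using k2_sub[OF sg X' Y' _ cd Xs bip] h ab by blast
  qed
qed

lemma pair_split: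
  fixes f :: "complex \<Rightarrow> 'b::comm_monoid_add" and g :: "complex \<Rightarrow> 'c::comm_monoid_mult"
  assumes "a \<in> set as" "-a \<in> set as" "(a::complex) \<noteq> 0"
  shows "sum_list (map f as) = f a + f (-a) + sum_list (map f (remove1 (-a) (remove1 a as)))"
    "prod_list (map g as) = g a * g (-a) * prod_list (map g (remove1 (-a) (remove1 a as)))"
    "length (remove1 (-a) (remove1 a as)) = length as - 2"
    "set (remove1 (-a) (remove1 a as)) \<subseteq> set as"
proof -
  have m: "-a \<in> set (remove1 a as)" using assms by (simp add: in_set_remove1)
  show "sum_list (map f as) = f a + f (-a) + sum_list (map f (remove1 (-a) (remove1 a as)))"
    using sum_list_map_remove1[OF assms(1), of f] sum_list_map_remove1[OF m, of f] by (simp add: add.assoc)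
  show "prod_list (map g as) = g a * g (-a) * prod_list (map g (remove1 (-a) (remove1 a as)))"
    using prod_list_map_remove1[OF assms(1), of g] prod_list_map_remove1[OF m, of g] by (simp add: mult.assoc)
  show "length (remove1 (-a) (remove1 a as)) = length as - 2"
    using m assms(1) by (simp add: length_remove1)
  show "set (remove1 (-a) (remove1 a as)) \<subseteq> set as"
    by (meson notin_set_remove1 subsetI)
qed

lemma prod_list_pos_real: "\<forall>z\<in>set zs. (z::real) > 0 \<Longrightarrow> prod_list zs > 0"
  by (induction zs) auto

lemma cmod_prod_list: "prod_list (map cmod as) = cmod (prod_list as)"
  by (induction as) (auto simp: norm_mult)

lemma Re_sum_list: "Re (sum_list xs) = sum_list (map Re xs)"
  by (induction xs) auto

theorem theorem2p2:
  fixes n :: nat and E :: "nat \<Rightarrow> nat \<Rightarrow> bool"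
  assumes "simple_graph n E"
    and "bipartite n E"
    and "det (adj_mat n E) \<noteq> 0"
    and "\<not> isomorphic n E 4 P4_edge"
  shows "energy n E \<ge> real n - 1 + avg_degree n E"
proof -
  note sg = assms(1)
  obtain X where Xs: "X \<subseteq> {0..<n}" and bip: "\<forall>i j. E i j \<longrightarrow> (i \<in> X \<longleftrightarrow> j \<notin> X)"
    using assms(2) unfolding bipartite_def by blast
  obtain p where p: "p permutes {0..<n}" "\<forall>i<n. E i (p i)" using matching[OF assms(3)] by blast
  define k where "k = card X"
  have kY: "card ({0..<n} - X) = k" and nk: "n = 2 * k"
    using balanced[OF sg Xs bip p] unfolding k_def by auto
  define m where "m = num_edges n E"
  have mb: "m \<le> k * (k - 1) + 1" "m \<le> k * k"
    using m_bound[OF sg Xs bip assms(3) k_def[symmetric] kY] unfolding m_def by auto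
  obtain as where len: "length as = n" and en: "energy n E = sum_list (map cmod as)"
    and dt: "prod_list as = complex_of_real (det (adj_mat n E))"
    and trr: "sum_list (map (\<lambda>a. a^2) as) = tr n (Ac n E * Ac n E)"
    and ev: "\<And>a. eigenvalue (Ac n E) a \<longleftrightarrow> a \<in> set as"
    using spectral[OF sg] by blast
  have tr2: "sum_list (map (\<lambda>a. a^2) as) = of_nat (2 * m)"
    using trr tr_deg[OF sg] deg_total[OF sg Xs bip] unfolding m_def by simp
  have nz: "a \<noteq> 0" if "a \<in> set as" for a
  proof
    assume "a = 0"
    hence "prod_list as = 0" using that by (simp add: prod_list_zero_iff)
    thus False using dt assms(3) by simp
  qed
  have re: "Im a = 0" if "a \<in> set as" for a using eigen_real[OF sg] ev that by blast
  have ng: "-a \<in> set as" if "a \<in> set as" for a using eigen_neg[OF sg bip] ev that by blast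
  define ys where "ys = map cmod as"
  have ypos: "\<forall>y\<in>set ys. y > 0" using nz unfolding ys_def by auto
  have lenys: "length ys = n" using len unfolding ys_def by simp
  have "prod_list ys = \<bar>det (adj_mat n E)\<bar>" unfolding ys_def cmod_prod_list dt by simp
  hence pg: "prod_list ys \<ge> 1" using det_ge1[OF assms(3)] by simp
  have lnsum: "sum_list (map ln ys) \<ge> 0" using sum_ln_prod[OF ypos] pg by simp
  have sq1: "cmod a ^ 2 = Re (a^2)" if "a \<in> set as" for a
    using re[OF that] by (simp add: cmod_power2 Re_power2)
  have "sum_list (map (\<lambda>y. y^2) ys) = sum_list (map (\<lambda>a. Re (a^2)) as)"
    unfolding ys_def using sq1 by (simp add: o_def cong: map_cong)
  also have "\<dots> = Re (sum_list (map (\<lambda>a. a^2) as))" by (simp add: Re_sum_list o_def)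
  also have "\<dots> = 2 * m" using tr2 by simp
  finally have sq: "sum_list (map (\<lambda>y. y^2) ys) = 2 * m" .
  have avg: "avg_degree n E = 2 * m / n" unfolding avg_degree_def m_def by simp
  have "sum_list ys \<ge> real n - 1 + 2 * m / n"
  proof (cases "2 * m \<le> n")
    case True
    have "sum_list ys \<ge> n" using sum_ge_len[OF ypos lnsum] lenys by simp
    moreover have "2 * m / n \<le> (1::real)"
    proof (cases "n = 0")
      case False thus ?thesis using True by (simp add: divide_le_eq_1)
    qed simp
    ultimately show ?thesis by linarith
  next
    case False
    have k2: "k \<ge> 2"
    proof (rule ccontr)
      assume "\<not> k \<ge> 2"
      hence "k = 0 \<or> k = 1" by arith
      thus False using mb False nk by auto
    qed
    show ?thesis
    proof (cases "k = 2")
      case True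
      hence "m = 3" using mb False nk by simp
      hence "isomorphic 4 E 4 P4_edge"
        using k2_case[of E X] sg Xs bip True kY nk k_def unfolding m_def by simp
      thus ?thesis using assms(4) nk True by simp
    next
      case False
      hence k3: "k \<ge> 3" using k2 by simp
      have pairb: "2 * cmod a ^ 2 + sum_list (map (\<lambda>b. cmod b ^ 2) (remove1 (-a) (remove1 a as))) = 2 * m"
        if "a \<in> set as" for a
      proof -
        have "sum_list (map (\<lambda>b. cmod b ^ 2) as) = 2 * m" using sq unfolding ys_def by (simp add: o_def)
        thus ?thesis using pair_split(1)[OF that ng[OF that] nz[OF that], of "\<lambda>b. cmod b ^ 2"] by simp
      qed
      have psi_ok: "psi n y \<ge> 0" if yin: "y \<in> set ys" for y
      proof -
        obtain a where a: "a \<in> set as" "y = cmod a" using yin unfolding ys_def by auto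
        have ypos': "y > 0" using ypos yin by auto
        let ?r = "remove1 (-a) (remove1 a as)"
        have rnn: "sum_list (map (\<lambda>b. cmod b ^ 2) ?r) \<ge> 0" by (intro sum_list_nonneg) auto
        show ?thesis
        proof (cases "k = 3")
          case True
          have n6: "real n = 6" using nk True by simp
          have rpos: "\<forall>z\<in>set (map cmod ?r). z > 0" using pair_split(4)[OF a(1) ng[OF a(1)] nz[OF a(1)]] nz by auto
          have lr: "length (map cmod ?r) = 4" using pair_split(3)[OF a(1) ng[OF a(1)] nz[OF a(1)]] len nk True by simp
          have "prod_list (map cmod as) = y * y * prod_list (map cmod ?r)"
            using pair_split(2)[OF a(1) ng[OF a(1)] nz[OF a(1)], of cmod] a by simp
          hence "y * y * prod_list (map cmod ?r) \<ge> 1" using pg unfolding ys_def by simp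
          hence l0: "ln (y * y * prod_list (map cmod ?r)) \<ge> 0" by simp
          have P: "prod_list (map cmod ?r) > 0" using rpos by (rule prod_list_pos_real)
          have "ln (y * y * prod_list (map cmod ?r)) = ln (y * y) + ln (prod_list (map cmod ?r))"
            by (rule ln_mult_pos) (use ypos' P in auto)
          moreover have "ln (y * y) = ln y + ln y" by (rule ln_mult_pos) (use ypos' in auto)
          ultimately have "2 * ln y + ln (prod_list (map cmod ?r)) \<ge> 0" using l0 by linarith
          hence lnr: "sum_list (map ln (map cmod ?r)) \<ge> -2 * ln y" using sum_ln_prod[OF rpos] by simp
          have "y * sum_list (map (\<lambda>z. z^2) (map cmod ?r)) \<ge> 4 + 4 * ln y + 2 * sum_list (map ln (map cmod ?r))"
            using sq_sum_bound[OF ypos' rpos] lr by simp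
          hence "y * sum_list (map (\<lambda>z. z^2) (map cmod ?r)) \<ge> 4" using lnr by linarith
          hence "sum_list (map (\<lambda>z. z^2) (map cmod ?r)) \<ge> 4 / y" using ypos' by (simp add: field_simps)
          moreover have "2 * y^2 + sum_list (map (\<lambda>z. z^2) (map cmod ?r)) = 2 * m"
            using pairb[OF a(1)] a by (simp add: o_def)
          moreover have "m \<le> 7" using mb True by simp
          ultimately have "2 * y^2 + 4 / y \<le> 14" by linarith
          hence "y \<le> 5/2" using cap6 ypos' by blast
          thus ?thesis using psi_nonneg[of "real n" y "5/2"] psi_C6 n6 ypos' by simp
        next
          case False
          hence k4: "k \<ge> 4" using k3 by simp
          have "2 * y^2 \<le> 2 * m" using pairb[OF a(1)] a rnn by simp
          also have "\<dots> \<le> 2 * (k * k)"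
          proof -
            have "real m \<le> real (k * k)" using mb(2) by (simp only: of_nat_le_iff)
            thus ?thesis by simp
          qed
          finally have "y^2 \<le> (real k)^2" by (simp add: power2_eq_square)
          hence "y \<le> real k" using ypos' by (simp add: power2_le_iff_abs_le)
          hence "y \<le> real n / 2" using nk by simp
          moreover have "real n \<ge> 8" using nk k4 by simp
          ultimately show ?thesis using psi_nonneg[of "real n" y "real n / 2"] psi_C8 ypos' by simp
        qed
      qed
      have "real n \<ge> 2" using nk k2 by simp
      hence "sum_list ys \<ge> real n - 1 + sum_list (map (\<lambda>y. y^2) ys) / n"
        using key_sum[OF lenys _ _ lnsum] ypos psi_ok by blast
      thus ?thesis using sq by simp
    qed
  qed
  thus ?thesis using en avg unfolding ys_def by simp
qed


end
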